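(* Let $q=3$ and $n\geq 3$, and let $c>0$ be a real number such that $k=\frac{n}{3}(\log(2n)+c)$ is an integer. Then $$\Vert \nu_n^{*k}-\pi_n\Vert_{TV}^2\leq \frac52\left(e^{e^{-c}}-1\right).$$
   Context: For integers $n\geq1$, $q\geq2$, the Hamming scheme $H(n,q)$ is the graph with vertex set $X_n=\{0,1,\dots,q-1\}^n$ in which $x$ and $x'$ are adjacent ($x\sim x'$) iff they differ in exactly one coordinate. The simple random walk has transition probability $p_n(x,x')=\frac{1}{n(q-1)}$ if $x\sim x'$ and $0$ otherwise. Let $p_n^{(k)}$ denote the $k$-step transition probability ($p_n^{(0)}(x,x')=\delta_{x,x'}$), $x^{(0)}=(0,\dots,0)$, and $\nu_n^{*k}(x)=p_n^{(k)}(x^{(0)},x)$. $\pi_n$ is the uniform probability measure on $X_n$. For measures $\mu,\nu$ on $X_n$, $\Vert\mu-\nu\Vert_{TV}=\max_{S\subset X_n}|\mu(S)-\nu(S)|$. *)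

theory Defs
  imports Complex_Main
begin

definition hamming_space :: "nat \<Rightarrow> nat \<Rightarrow> nat list set" where
  "hamming_space n q = {xs. length xs = n \<and> (\<forall>a\<in>set xs. a < q)}"

definition hamming_adj :: "nat list \<Rightarrow> nat list \<Rightarrow> bool" where
  "hamming_adj xs ys \<longleftrightarrow> length xs = length ys \<and>
     card {i. i < length xs \<and> xs ! i \<noteq> ys ! i} = 1"

definition hamming_p :: "nat \<Rightarrow> nat \<Rightarrow> nat list \<Rightarrow> nat list \<Rightarrow> real" where
  "hamming_p n q x y = (if hamming_adj x y then 1 / (real n * (real q - 1)) else 0)"

fun hamming_pk :: "nat \<Rightarrow> nat \<Rightarrow> nat \<Rightarrow> nat list \<Rightarrow> nat list \<Rightarrow> real" where
  "hamming_pk n q 0 x y = (if x = y then 1 else 0)"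
| "hamming_pk n q (Suc k) x y =
     (\<Sum>z\<in>hamming_space n q. hamming_pk n q k x z * hamming_p n q z y)"

definition hamming_nu :: "nat \<Rightarrow> nat \<Rightarrow> nat \<Rightarrow> nat list \<Rightarrow> real" where
  "hamming_nu n q k x = hamming_pk n q k (replicate n 0) x"

definition hamming_pi :: "nat \<Rightarrow> nat \<Rightarrow> nat list \<Rightarrow> real" where
  "hamming_pi n q x = 1 / real (card (hamming_space n q))"

definition tv_dist :: "'a set \<Rightarrow> ('a \<Rightarrow> real) \<Rightarrow> ('a \<Rightarrow> real) \<Rightarrow> real" where
  "tv_dist X \<mu> \<nu> = Max {\<bar>(\<Sum>x\<in>S. \<mu> x) - (\<Sum>x\<in>S. \<nu> x)\<bar> | S. S \<subseteq> X}"

end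

theory Submission
  imports Defs "HOL-Analysis.Analysis"
begin


lemma hs_finite: "finite (hamming_space n q)"
proof -
  have "hamming_space n q \<subseteq> {xs. set xs \<subseteq> {..<q} \<and> length xs = n}"
    by (auto simp: hamming_space_def)
  thus ?thesis using finite_lists_length_eq[of "{..<q}" n] finite_subset by blast
qed

lemma hs_0: "hamming_space 0 q = {[]}"
  by (auto simp: hamming_space_def)

lemma hs_Suc: "hamming_space (Suc n) q = (\<lambda>(a,xs). a#xs) ` ({..<q} \<times> hamming_space n q)"
proof
  show "hamming_space (Suc n) q \<subseteq> (\<lambda>(a,xs). a#xs) ` ({..<q} \<times> hamming_space n q)"
  proof
    fix x assume "x \<in> hamming_space (Suc n) q"
    then obtain a xs where "x = a # xs" "length xs = n" "a < q" "\<forall>b\<in>set xs. b < q"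
      by (cases x) (auto simp: hamming_space_def)
    thus "x \<in> (\<lambda>(a,xs). a#xs) ` ({..<q} \<times> hamming_space n q)"
      by (auto simp: hamming_space_def image_iff)
  qed
qed (auto simp: hamming_space_def)

lemma sum_prod_hs:
  "(\<Sum>x\<in>hamming_space n q. \<Prod>i<n. (h i (x!i) :: real)) = (\<Prod>i<n. \<Sum>a<q. h i a)"
proof (induction n arbitrary: h)
  case 0
  then show ?case by (simp add: hs_0)
next
  case (Suc n)
  have inj: "inj_on (\<lambda>(a,xs). a#xs) ({..<q} \<times> hamming_space n q)"
    by (auto simp: inj_on_def)
  have "(\<Sum>x\<in>hamming_space (Suc n) q. \<Prod>i<Suc n. h i (x!i))
      = (\<Sum>p\<in>{..<q} \<times> hamming_space n q. \<Prod>i<Suc n. h i ((fst p # snd p)!i))"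
    unfolding hs_Suc by (subst sum.reindex[OF inj]) (auto intro!: sum.cong)
  also have "\<dots> = (\<Sum>p\<in>{..<q} \<times> hamming_space n q. h 0 (fst p) * (\<Prod>i<n. h (Suc i) (snd p ! i)))"
    by (simp only: prod.lessThan_Suc_shift) simp
  also have "\<dots> = (\<Sum>a<q. h 0 a) * (\<Sum>xs\<in>hamming_space n q. \<Prod>i<n. h (Suc i) (xs ! i))"
    by (simp add: sum_product sum.cartesian_product case_prod_beta)
  also have "\<dots> = (\<Sum>a<q. h 0 a) * (\<Prod>i<n. \<Sum>a<q. h (Suc i) a)"
    using Suc.IH[of "\<lambda>i. h (Suc i)"] by simp
  also have "\<dots> = (\<Prod>i<Suc n. \<Sum>a<q. h i a)"
    by (simp only: prod.lessThan_Suc_shift)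
  finally show ?case .
qed

lemma card_hs: "real (card (hamming_space n q)) = real q ^ n"
  using sum_prod_hs[where n=n and q=q and h="\<lambda>_ _. 1"] by simp

definition gg :: "nat \<Rightarrow> real" where "gg a = (if a = 0 then 2/3 else -1/3)"
definition FF :: "nat set \<Rightarrow> nat list \<Rightarrow> real" where "FF S x = (\<Prod>i\<in>S. gg (x!i))"
definition lam :: "nat \<Rightarrow> nat \<Rightarrow> real" where "lam n s = 1 - 3 * real s / (2 * real n)"

lemma sum3: "(\<Sum>a::nat<3. f a) = f 0 + f 1 + (f 2 :: real)"
  by (simp add: numeral_3_eq_3 numeral_2_eq_2)

lemma FF_ext: "S \<subseteq> {..<n} \<Longrightarrow> FF S x = (\<Prod>i<n. if i \<in> S then gg (x!i) else 1)"
  unfolding FF_def by (subst prod.inter_restrict[symmetric]) (auto intro: prod.cong)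

lemma orth:
  assumes "S \<subseteq> {..<n}" "T \<subseteq> {..<n}"
  shows "(\<Sum>x\<in>hamming_space n 3. FF S x * FF T x)
       = (if S = T then (2/3)^card S * 3^(n - card S) else 0)"
proof -
  define h where "h i a = (if i \<in> S then gg a else 1) * (if i \<in> T then gg a else 1)" for i a
  have "(\<Sum>x\<in>hamming_space n 3. FF S x * FF T x) = (\<Sum>x\<in>hamming_space n 3. \<Prod>i<n. h i (x!i))"
    by (simp add: FF_ext[OF assms(1)] FF_ext[OF assms(2)] h_def prod.distrib)
  also have "\<dots> = (\<Prod>i<n. \<Sum>a<3. h i a)" by (rule sum_prod_hs)
  also have "\<dots> = (\<Prod>i<n. if i \<in> S \<and> i \<in> T then 2/3 else if i \<in> S \<or> i \<in> T then 0 else 3)"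
    by (rule prod.cong) (auto simp: h_def sum3 gg_def)
  also have "\<dots> = (if S = T then (2/3)^card S * 3^(n - card S) else 0)"
  proof (cases "S = T")
    case True
    have "(\<Prod>i<n. if i \<in> S \<and> i \<in> T then 2/3 else if i \<in> S \<or> i \<in> T then 0 else 3)
        = (\<Prod>i<n. if i \<in> S then 2/3 else (3::real))"
      using True by (intro prod.cong) auto
    also have "\<dots> = (2/3)^card ({..<n} \<inter> S) * 3^card ({..<n} \<inter> - S)"
      by (simp add: prod.If_cases)
    also have "{..<n} \<inter> S = S" using assms by auto
    also have "card ({..<n} \<inter> - S) = n - card S"
    proof -
      have "{..<n} \<inter> - S = {..<n} - S" by auto
      thus ?thesis using assms(1) by (simp add: card_Diff_subset finite_subset)
    qed
    finally show ?thesis using True by simp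
  next
    case False
    then obtain i where i: "i \<in> S \<and> i \<notin> T \<or> i \<notin> S \<and> i \<in> T" by blast
    hence "i < n" using assms by auto
    with i show ?thesis using False
      by (auto intro!: prod_zero)
  qed
  finally show ?thesis .
qed



lemma sum_gg: "(\<Sum>a<3. gg a) = 0" by (simp add: sum3 gg_def)

lemma upd_in_hs: "y \<in> hamming_space n q \<Longrightarrow> b < q \<Longrightarrow> y[i:=b] \<in> hamming_space n q"
  by (auto simp: hamming_space_def dest!: set_update_subset_insert[THEN subsetD])

lemma nbrs:
  assumes y: "y \<in> hamming_space n 3"
  shows "{z\<in>hamming_space n 3. hamming_adj z y}
       = (\<lambda>(i,b). y[i:=b]) ` (SIGMA i:{..<n}. {..<3} - {y!i})"
proof
  have ly: "length y = n" using y by (simp add: hamming_space_def)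
  show "{z\<in>hamming_space n 3. hamming_adj z y} \<subseteq> (\<lambda>(i,b). y[i:=b]) ` (SIGMA i:{..<n}. {..<3} - {y!i})"
  proof
    fix z assume z: "z \<in> {z\<in>hamming_space n 3. hamming_adj z y}"
    hence lz: "length z = n" and zb: "\<forall>a\<in>set z. a < 3" by (auto simp: hamming_space_def)
    from z have "card {i. i < length z \<and> z ! i \<noteq> y ! i} = 1" unfolding hamming_adj_def by blast
    then obtain i where D: "{i. i < length z \<and> z ! i \<noteq> y ! i} = {i}" by (rule card_1_singletonE)
    hence i: "i < n" "z!i \<noteq> y!i" using lz by auto
    have "z = y[i := z!i]"
    proof (rule nth_equalityI)
      show "length z = length (y[i := z ! i])" using lz ly by simp
      fix j assume "j < length z"
      thus "z ! j = y[i := z ! i] ! j" using D lz ly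
        by (cases "j = i") (auto simp: nth_list_update)
    qed
    moreover have "z!i < 3" using zb i lz by auto
    ultimately show "z \<in> (\<lambda>(i,b). y[i:=b]) ` (SIGMA i:{..<n}. {..<3} - {y!i})"
      using i by (auto simp: image_iff intro!: bexI[of _ "(i, z!i)"])
  qed
  show "(\<lambda>(i,b). y[i:=b]) ` (SIGMA i:{..<n}. {..<3} - {y!i}) \<subseteq> {z\<in>hamming_space n 3. hamming_adj z y}"
  proof
    fix z assume "z \<in> (\<lambda>(i,b). y[i:=b]) ` (SIGMA i:{..<n}. {..<3} - {y!i})"
    then obtain i b where i: "i < n" "b < 3" "b \<noteq> y!i" and zz: "z = y[i:=b]" by auto
    have "{j. j < length (y[i:=b]) \<and> y[i:=b] ! j \<noteq> y ! j} = {i}"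
      using i ly by (auto simp: nth_list_update split: if_splits)
    thus "z \<in> {z\<in>hamming_space n 3. hamming_adj z y}"
      using upd_in_hs[OF y i(2)] zz by (simp add: hamming_adj_def)
  qed
qed

lemma nbrs_inj:
  assumes y: "y \<in> hamming_space n 3"
  shows "inj_on (\<lambda>(i,b). y[i:=b]) (SIGMA i:{..<n}. {..<3} - {y!i})"
proof (rule inj_onI)
  have ly: "length y = n" using y by (simp add: hamming_space_def)
  fix p p' assume pp: "p \<in> (SIGMA i:{..<n}. {..<3::nat} - {y!i})" "p' \<in> (SIGMA i:{..<n}. {..<3::nat} - {y!i})"
    "(\<lambda>(i,b). y[i:=b]) p = (\<lambda>(i,b). y[i:=b]) p'"
  obtain i b i' b' where pd: "p = (i,b)" "p' = (i',b')" by (cases p, cases p') auto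
  have h: "i < n" "b < 3" "b \<noteq> y!i" "i' < n" "b' < 3" "b' \<noteq> y!i'"
    "y[i := b] = y[i' := b']" using pp pd by auto
  have "i = i'"
  proof (rule ccontr)
    assume "i \<noteq> i'"
    have "y[i := b] ! i = b" using h(1) ly by simp
    moreover have "y[i' := b'] ! i = y ! i" using \<open>i \<noteq> i'\<close> by simp
    ultimately show False using h by simp
  qed
  moreover have "b = b'" using h ly \<open>i = i'\<close> by (metis nth_list_update_eq)
  ultimately show "p = p'" using pd by simp
qed

lemma FF_upd:
  assumes "i < length y" "finite S"
  shows "FF S (y[i:=b]) = (if i \<in> S then gg b * FF (S - {i}) y else FF S y)"
proof (cases "i \<in> S")
  case True
  have "FF S (y[i:=b]) = gg b * FF (S - {i}) (y[i:=b])"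
  proof (cases "finite S")
    case True
    then show ?thesis unfolding FF_def using \<open>i \<in> S\<close> assms by (simp add: prod.remove)
  next
    case False
    then show ?thesis using assms(2) by simp
  qed
  also have "FF (S - {i}) (y[i:=b]) = FF (S - {i}) y"
    unfolding FF_def by (rule prod.cong) auto
  finally show ?thesis using True by simp
next
  case False
  then have "FF S (y[i:=b]) = FF S y" unfolding FF_def by (intro prod.cong refl) (metis nth_list_update_neq)
  then show ?thesis using False by simp
qed

lemma FF_split: "finite S \<Longrightarrow> i \<in> S \<Longrightarrow> FF S y = gg (y!i) * FF (S - {i}) y"
  unfolding FF_def by (cases "finite S") (simp_all add: prod.remove)

lemma step_eig:
  assumes y: "y \<in> hamming_space n 3" and S: "S \<subseteq> {..<n}" and n: "n \<ge> 1"
  shows "(\<Sum>z\<in>hamming_space n 3. FF S z * hamming_p n 3 z y) = lam n (card S) * FF S y"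
proof -
  have ly: "length y = n" using y by (simp add: hamming_space_def)
  have fS: "finite S" using S finite_subset by blast
  have cS: "card S \<le> n" using card_mono[OF _ S] by simp
  have y3: "y!i < 3" if "i < n" for i using y that ly by (auto simp: hamming_space_def)
  define P where "P = (SIGMA i:{..<n}. {..<3::nat} - {y!i})"
  have "(\<Sum>z\<in>hamming_space n 3. FF S z * hamming_p n 3 z y)
      = (\<Sum>z\<in>hamming_space n 3. if hamming_adj z y then FF S z / (2 * real n) else 0)"
    by (intro sum.cong) (auto simp: hamming_p_def)
  also have "\<dots> = (\<Sum>z\<in>{z\<in>hamming_space n 3. hamming_adj z y}. FF S z / (2 * real n))"
    by (simp add: sum.inter_filter hs_finite)
  also have "\<dots> = (\<Sum>p\<in>P. FF S ((\<lambda>(i,b). y[i:=b]) p) / (2 * real n))"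
    unfolding nbrs[OF y] P_def[symmetric]
    using sum.reindex[OF nbrs_inj[OF y], of "\<lambda>z. FF S z / (2 * real n)"] by (simp add: P_def)
  also have "\<dots> = (\<Sum>i<n. \<Sum>b\<in>{..<3} - {y!i}. FF S (y[i := b]) / (2 * real n))"
    unfolding P_def by (subst sum.Sigma) (auto simp: case_prod_unfold)
  also have "\<dots> = (\<Sum>i<n. (if i \<in> S then -1 else 2) * FF S y / (2 * real n))"
  proof (rule sum.cong[OF refl])
    fix i assume i: "i \<in> {..<n}"
    have "(\<Sum>b\<in>{..<3} - {y!i}. FF S (y[i := b])) = (if i \<in> S then -1 else 2) * FF S y"
    proof (cases "i \<in> S")
      case True
      have "(\<Sum>b\<in>{..<3} - {y!i}. FF S (y[i := b])) = (\<Sum>b\<in>{..<3} - {y!i}. gg b) * FF (S - {i}) y"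
        using True i ly fS by (simp add: FF_upd sum_distrib_right)
      also have "(\<Sum>b\<in>{..<3} - {y!i}. gg b) = - gg (y!i)"
        using sum_diff1[of "{..<3::nat}" gg "y!i"] y3 i sum_gg by simp
      finally show ?thesis using True FF_split[OF fS True, of y] by simp
    next
      case False
      have "card ({..<3::nat} - {y!i}) = 2" using y3 i by simp
      thus ?thesis using False i ly fS by (simp add: FF_upd)
    qed
    thus "(\<Sum>b\<in>{..<3} - {y!i}. FF S (y[i := b]) / (2 * real n)) = (if i \<in> S then -1 else 2) * FF S y / (2 * real n)"
      by (simp add: sum_divide_distrib[symmetric])
  qed
  also have "\<dots> = (\<Sum>i<n. (if i \<in> S then -1 else 2)) * FF S y / (2 * real n)"
    by (simp add: sum_distrib_right sum_divide_distrib)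
  also have "(\<Sum>i<n. (if i \<in> S then -1 else 2::real)) = - real (card S) + 2 * (real n - real (card S))"
  proof -
    have "(\<Sum>i<n. (if i \<in> S then -1 else 2::real)) = - real (card ({..<n} \<inter> S)) + 2 * real (card ({..<n} - S))"
      by (simp add: sum.If_cases Diff_eq)
    also have "{..<n} \<inter> S = S" using S by auto
    also have "real (card ({..<n} - S)) = real n - real (card S)"
      using S fS cS by (simp add: card_Diff_subset of_nat_diff)
    finally show ?thesis .
  qed
  finally show ?thesis using n by (simp add: lam_def field_simps)
qed



definition cc :: "nat \<Rightarrow> nat \<Rightarrow> nat set \<Rightarrow> real" where
  "cc n k S = (1/3)^(n - card S) * lam n (card S)^k"

lemma nu_formula:
  assumes x: "x \<in> hamming_space n 3" and n: "n \<ge> 1"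
  shows "hamming_pk n 3 k (replicate n 0) x = (\<Sum>S\<in>Pow {..<n}. cc n k S * FF S x)"
  using x
proof (induction k arbitrary: x)
  case 0
  have lx: "length x = n" using 0 by (simp add: hamming_space_def)
  have "(if replicate n 0 = x then 1 else 0 :: real) = (\<Prod>i<n. if x!i = 0 then 1 else 0)"
  proof (cases "replicate n 0 = x")
    case True
    then show ?thesis by auto
  next
    case False
    then obtain i where "i < n" "x!i \<noteq> 0" using lx by (auto simp: list_eq_iff_nth_eq)
    then show ?thesis using False by (auto intro!: prod_zero[symmetric])
  qed
  also have "\<dots> = (\<Prod>i<n. gg (x!i) + 1/3)" by (intro prod.cong) (auto simp: gg_def)
  also have "\<dots> = (\<Sum>S\<in>Pow {..<n}. FF S x * (\<Prod>i\<in>{..<n} - S. 1/3))"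
    by (simp add: prod_add FF_def)
  also have "\<dots> = (\<Sum>S\<in>Pow {..<n}. cc n 0 S * FF S x)"
  proof (intro sum.cong refl)
    fix S assume "S \<in> Pow {..<n}"
    hence "card ({..<n} - S) = n - card S" by (simp add: card_Diff_subset finite_subset)
    thus "FF S x * (\<Prod>i\<in>{..<n} - S. 1/3) = cc n 0 S * FF S x" by (simp add: cc_def)
  qed
  finally show ?case by simp
next
  case (Suc k)
  have "hamming_pk n 3 (Suc k) (replicate n 0) x
      = (\<Sum>z\<in>hamming_space n 3. (\<Sum>S\<in>Pow {..<n}. cc n k S * FF S z) * hamming_p n 3 z x)"
    using Suc.IH by simp
  also have "\<dots> = (\<Sum>S\<in>Pow {..<n}. cc n k S * (\<Sum>z\<in>hamming_space n 3. FF S z * hamming_p n 3 z x))"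
    by (simp add: sum_distrib_right sum_distrib_left mult.assoc sum.swap[of _ "hamming_space n 3"])
  also have "\<dots> = (\<Sum>S\<in>Pow {..<n}. cc n (Suc k) S * FF S x)"
    by (intro sum.cong refl) (simp add: step_eig[OF Suc.prems _ n] cc_def)
  finally show ?case .
qed



lemma d_formula:
  assumes x: "x \<in> hamming_space n 3" and n: "n \<ge> 1"
  shows "hamming_nu n 3 k x - hamming_pi n 3 x = (\<Sum>S\<in>Pow {..<n} - {{}}. cc n k S * FF S x)"
proof -
  have "hamming_nu n 3 k x = (\<Sum>S\<in>Pow {..<n}. cc n k S * FF S x)"
    unfolding hamming_nu_def by (rule nu_formula[OF x n])
  also have "\<dots> = cc n k {} * FF {} x + (\<Sum>S\<in>Pow {..<n} - {{}}. cc n k S * FF S x)"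
    by (subst sum.remove[of _ "{}"]) auto
  also have "cc n k {} * FF {} x = hamming_pi n 3 x"
    by (simp add: cc_def lam_def FF_def hamming_pi_def card_hs power_one_over)
  finally show ?thesis by simp
qed

lemma sum_FF0: "S \<subseteq> {..<n} \<Longrightarrow> S \<noteq> {} \<Longrightarrow> (\<Sum>x\<in>hamming_space n 3. FF S x) = 0"
  using orth[of S n "{}"] by (simp add: FF_def)

lemma sum_d:
  assumes n: "n \<ge> 1"
  shows "(\<Sum>x\<in>hamming_space n 3. hamming_nu n 3 k x - hamming_pi n 3 x) = 0"
proof -
  have "(\<Sum>x\<in>hamming_space n 3. hamming_nu n 3 k x - hamming_pi n 3 x)
     = (\<Sum>x\<in>hamming_space n 3. \<Sum>S\<in>Pow {..<n} - {{}}. cc n k S * FF S x)"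
    by (intro sum.cong refl d_formula n)
  also have "\<dots> = (\<Sum>S\<in>Pow {..<n} - {{}}. cc n k S * (\<Sum>x\<in>hamming_space n 3. FF S x))"
    by (simp add: sum.swap[of _ "hamming_space n 3"] sum_distrib_left)
  also have "\<dots> = 0" by (intro sum.neutral) (auto simp: sum_FF0)
  finally show ?thesis .
qed

lemma sumsq_d:
  assumes n: "n \<ge> 1"
  shows "3^n * (\<Sum>x\<in>hamming_space n 3. (hamming_nu n 3 k x - hamming_pi n 3 x)\<^sup>2)
       = (\<Sum>S\<in>Pow {..<n} - {{}}. 2^card S * lam n (card S)^(2*k))"
proof -
  let ?P = "Pow {..<n} - {{}}"
  have "(\<Sum>x\<in>hamming_space n 3. (hamming_nu n 3 k x - hamming_pi n 3 x)\<^sup>2)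
     = (\<Sum>x\<in>hamming_space n 3. (\<Sum>S\<in>?P. cc n k S * FF S x) * (\<Sum>T\<in>?P. cc n k T * FF T x))"
    by (intro sum.cong refl) (simp only: d_formula[OF _ n] power2_eq_square)
  also have "\<dots> = (\<Sum>S\<in>?P. \<Sum>T\<in>?P. cc n k S * cc n k T * (\<Sum>x\<in>hamming_space n 3. FF S x * FF T x))"
    by (simp add: sum_product sum_distrib_left sum.swap[of _ "hamming_space n 3"] mult_ac)
  also have "\<dots> = (\<Sum>S\<in>?P. \<Sum>T\<in>?P. if T = S then cc n k S * cc n k S * ((2/3)^card S * 3^(n - card S)) else 0)"
    by (intro sum.cong refl) (auto simp: orth)
  also have "\<dots> = (\<Sum>S\<in>?P. cc n k S * cc n k S * ((2/3)^card S * 3^(n - card S)))"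
    by (intro sum.cong refl) (simp add: sum.delta)
  finally have e: "(\<Sum>x\<in>hamming_space n 3. (hamming_nu n 3 k x - hamming_pi n 3 x)\<^sup>2) = \<dots>" .
  have "3^n * (\<Sum>S\<in>?P. cc n k S * cc n k S * ((2/3)^card S * 3^(n - card S)))
      = (\<Sum>S\<in>?P. 2^card S * lam n (card S)^(2*k))"
    unfolding sum_distrib_left
  proof (intro sum.cong refl)
    fix S assume "S \<in> ?P"
    hence "card S \<le> n" using card_mono[of "{..<n}" S] by auto
    then obtain m where m: "n = card S + m" using le_Suc_ex by blast
    show "3^n * (cc n k S * cc n k S * ((2/3)^card S * 3^(n - card S))) = 2^card S * lam n (card S)^(2*k)"
    proof -
      let ?s = "card S" and ?L = "lam n (card S)"
      have a: "(3::real)^(?s + m) * (1/3)^m * (1/3)^m * (2/3)^?s * 3^m = 2^?s"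
        by (simp add: power_add power_divide field_simps)
      have "3^n * (cc n k S * cc n k S * ((2/3)^card S * 3^(n - card S)))
          = ((3::real)^(?s + m) * (1/3)^m * (1/3)^m * (2/3)^?s * 3^m) * (?L^k * ?L^k)"
        unfolding cc_def m by (simp add: mult_ac)
      also have "\<dots> = 2^card S * lam n (card S)^(2*k)" unfolding a by (simp add: power_add[symmetric] mult_2)
      finally show ?thesis .
    qed
  qed
  thus ?thesis using e by simp
qed

lemma tv_bound:
  fixes X :: "'a set" and \<mu> \<nu> :: "'a \<Rightarrow> real"
  assumes fin: "finite X" and s0: "(\<Sum>x\<in>X. \<mu> x - \<nu> x) = 0"
  shows "0 \<le> tv_dist X \<mu> \<nu>" "tv_dist X \<mu> \<nu> \<le> (\<Sum>x\<in>X. \<bar>\<mu> x - \<nu> x\<bar>) / 2"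
proof -
  let ?A = "{\<bar>(\<Sum>x\<in>S. \<mu> x) - (\<Sum>x\<in>S. \<nu> x)\<bar> | S. S \<subseteq> X}"
  have A: "?A = (\<lambda>S. \<bar>(\<Sum>x\<in>S. \<mu> x) - (\<Sum>x\<in>S. \<nu> x)\<bar>) ` Pow X" by auto
  have finA: "finite ?A" unfolding A using fin by simp
  have "0 \<in> ?A" by (auto intro!: exI[of _ "{}"])
  thus "0 \<le> tv_dist X \<mu> \<nu>" unfolding tv_dist_def using finA by (simp add: Max_ge)
  let ?d = "\<lambda>x. \<mu> x - \<nu> x"
  have pos: "(\<Sum>x\<in>X. max (?d x) 0) = (\<Sum>x\<in>X. \<bar>?d x\<bar>) / 2"
  proof -
    have "(\<Sum>x\<in>X. max (?d x) 0) = (\<Sum>x\<in>X. (\<bar>?d x\<bar> + ?d x) / 2)"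
      by (intro sum.cong refl) (auto simp: max_def)
    also have "\<dots> = ((\<Sum>x\<in>X. \<bar>?d x\<bar>) + (\<Sum>x\<in>X. ?d x)) / 2"
      by (simp add: sum_divide_distrib[symmetric] sum.distrib)
    finally show ?thesis using s0 by simp
  qed
  have neg: "(\<Sum>x\<in>X. max (- ?d x) 0) = (\<Sum>x\<in>X. \<bar>?d x\<bar>) / 2"
  proof -
    have "(\<Sum>x\<in>X. max (- ?d x) 0) = (\<Sum>x\<in>X. (\<bar>?d x\<bar> - ?d x) / 2)"
      by (intro sum.cong refl) (auto simp: max_def)
    also have "\<dots> = ((\<Sum>x\<in>X. \<bar>?d x\<bar>) - (\<Sum>x\<in>X. ?d x)) / 2"
      by (simp add: sum_divide_distrib[symmetric] sum_subtractf)
    finally show ?thesis using s0 by simp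
  qed
  have "a \<le> (\<Sum>x\<in>X. \<bar>\<mu> x - \<nu> x\<bar>) / 2" if "a \<in> ?A" for a
  proof -
    from that obtain S where S: "S \<subseteq> X" and a: "a = \<bar>(\<Sum>x\<in>S. \<mu> x) - (\<Sum>x\<in>S. \<nu> x)\<bar>" by auto
    have fS: "finite S" using S fin finite_subset by blast
    have eq: "(\<Sum>x\<in>S. \<mu> x) - (\<Sum>x\<in>S. \<nu> x) = (\<Sum>x\<in>S. ?d x)" by (simp add: sum_subtractf)
    have "(\<Sum>x\<in>S. ?d x) \<le> (\<Sum>x\<in>S. max (?d x) 0)" by (intro sum_mono) auto
    also have "\<dots> \<le> (\<Sum>x\<in>X. max (?d x) 0)" by (intro sum_mono2 fin S) auto
    finally have 1: "(\<Sum>x\<in>S. ?d x) \<le> (\<Sum>x\<in>X. \<bar>?d x\<bar>) / 2" using pos by simp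
    have "- (\<Sum>x\<in>S. ?d x) = (\<Sum>x\<in>S. - ?d x)" by (simp add: sum_negf[symmetric] del: minus_diff_eq)
    also have "\<dots> \<le> (\<Sum>x\<in>S. max (- ?d x) 0)" by (intro sum_mono) auto
    also have "\<dots> \<le> (\<Sum>x\<in>X. max (- ?d x) 0)" by (intro sum_mono2 fin S) auto
    finally have 2: "- (\<Sum>x\<in>S. ?d x) \<le> (\<Sum>x\<in>X. \<bar>?d x\<bar>) / 2" using neg by simp
    show ?thesis using 1 2 unfolding a eq by linarith
  qed
  thus "tv_dist X \<mu> \<nu> \<le> (\<Sum>x\<in>X. \<bar>\<mu> x - \<nu> x\<bar>) / 2"
    unfolding tv_dist_def using finA \<open>0 \<in> ?A\<close> by (subst Max_le_iff) auto
qed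



lemma e_gt_27: "exp 1 > (27/10::real)"
  using e_approx_32 by (simp add: abs_if split: if_split_asm)

lemma exp_nat: "exp (real m) = exp 1 ^ m"
  using exp_of_nat_mult[of m 1] by simp

lemma ln4: "ln (4::real) \<ge> 4/3"
proof -
  have "exp (4::real) = exp 1 ^ 4" using exp_nat[of 4] by simp
  also have "\<dots> \<le> (272/100)^4" using e_less_272 by (intro power_mono) auto
  also have "\<dots> \<le> 64" by (simp add: power_divide)
  finally have "4 \<le> ln (64::real)" by (metis exp_gt_zero exp_le_cancel_iff exp_ln zero_less_numeral)
  also have "ln (64::real) = 3 * ln 4" using ln_realpow[of 4 3] by simp
  finally show ?thesis by simp
qed

lemma ln3: "ln (3::real) \<le> 10/9"
proof -
  have "(27/10::real)^10 \<le> exp 1 ^ 10" using e_gt_27 by (intro power_mono) auto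
  also have "\<dots> = exp 10" using exp_nat[of 10] by simp
  finally have "(3::real)^9 \<le> exp 10" using order_trans[of "19683::real" "(27/10)^10"] by (simp add: power_divide)
  hence "ln ((3::real)^9) \<le> 10" by (metis exp_le_cancel_iff exp_ln zero_less_numeral zero_less_power)
  thus ?thesis using ln_realpow[of 3 9] by simp
qed

lemma ln_ge: "exp a \<le> x \<Longrightarrow> a \<le> ln (x::real)"
  by (metis exp_gt_zero exp_le_cancel_iff exp_ln less_le_trans)

lemma ln2n:
  fixes n :: nat assumes "n \<ge> 3"
  shows "5 * (real n - 2) \<le> 2 * real n * ln (2 * real n)"
proof -
  consider "n = 3" | "n \<ge> 4" "n \<le> 10" | "n \<ge> 10" using assms by linarith
  then show ?thesis
  proof cases
    case 1
    have "1 \<le> ln (6::real)" using exp_le by (intro ln_ge) simp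
    thus ?thesis using 1 by simp
  next
    case 2
    have "exp (2::real) = exp 1 ^ 2" using exp_nat[of 2] by simp
    also have "\<dots> \<le> (272/100)^2" using e_less_272 by (intro power_mono) auto
    also have "\<dots> \<le> 2 * real n" using 2 by (simp add: power_divide)
    finally have "2 \<le> ln (2 * real n)" by (rule ln_ge)
    hence "2 * real n * 2 \<le> 2 * real n * ln (2 * real n)" by (intro mult_left_mono) auto
    moreover have "5 * (real n - 2) \<le> 2 * real n * 2" using 2 by simp
    ultimately show ?thesis by linarith
  next
    case 3
    have "exp (5::real) = exp 1 ^ 5" using exp_nat[of 5] by simp
    also have "\<dots> \<le> (272/100)^5" using e_less_272 by (intro power_mono) auto
    also have "\<dots> \<le> 20^2" by (simp add: power_divide)
    also have "\<dots> \<le> (2 * real n)^2" using 3 by (intro power_mono) auto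
    finally have "5 \<le> ln ((2 * real n)^2)" by (rule ln_ge)
    also have "\<dots> = 2 * ln (2 * real n)" using 3 ln_realpow[of "2 * real n" 2] by simp
    finally have "5/2 * (2 * real n) \<le> ln (2 * real n) * (2 * real n)" using 3 by (intro mult_right_mono) auto
    thus ?thesis by (simp add: algebra_simps)
  qed
qed



lemma num_bound:
  fixes n k :: nat and c :: real
  assumes n: "n \<ge> 3" and c: "c > 0" and k: "real k = real n / 3 * (ln (2 * real n) + c)"
  shows "3^n * (1/4)^k \<le> 9 * exp (- c)"
proof -
  define L where "L = ln (2 * real n)"
  define A where "A = ln (4::real)"
  define B where "B = ln (3::real)"
  have L0: "L \<ge> 0" unfolding L_def using n by simp
  have A: "A \<ge> 4/3" unfolding A_def by (rule ln4)
  have B: "B \<le> 10/9" unfolding B_def by (rule ln3)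
  have nr: "real n \<ge> 3" using n by simp
  have h1: "5 * (real n - 2) \<le> 2 * real n * L" unfolding L_def by (rule ln2n[OF n])
  have "(real n - 2) * B \<le> (real n - 2) * (10/9)" using B nr by (intro mult_left_mono) auto
  also have "\<dots> \<le> real n * L * (4/3) / 3" using h1 by simp
  also have "\<dots> \<le> real n * L * A / 3" using A L0 nr by (intro divide_right_mono mult_left_mono) auto
  finally have i1: "(real n - 2) * B \<le> real n * L * A / 3" .
  have "c * 1 \<le> c * (real n * A / 3)"
  proof (intro mult_left_mono)
    have "real n * A \<ge> 3 * (4/3)" using A nr by (intro mult_mono) auto
    thus "1 \<le> real n * A / 3" by simp
  qed (use c in auto)
  hence i2: "c \<le> c * real n * A / 3" by simp
  have e1: "real k * A = real n * L * A / 3 + c * real n * A / 3"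
    unfolding k L_def[symmetric] by (simp add: algebra_simps add_divide_distrib)
  have e2: "(real n - 2) * B = real n * B - 2 * B" by (simp add: algebra_simps)
  have key: "real n * B - real k * A \<le> 2 * B - c"
    using i1 i2 e1 e2 by linarith
  have "3^n * (1/4)^k = exp (real n * B - real k * A)"
    unfolding A_def B_def exp_diff exp_of_nat_mult by (simp add: power_one_over)
  also have "\<dots> \<le> exp (2 * B - c)" using key by simp
  also have "\<dots> = 9 * exp (- c)"
  proof -
    have "exp (2 * B) = exp B * exp B" by (simp only: mult_2 exp_add)
    also have "exp B = 3" by (simp add: B_def)
    finally have "exp (2 * B) = 9" by simp
    thus ?thesis by (simp add: exp_diff exp_minus divide_inverse)
  qed
  finally show ?thesis .
qed

lemma sum_pow_card: "finite A \<Longrightarrow> (\<Sum>S\<in>Pow A. (a::real)^card S) = (1 + a)^card A"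
  using prod_add[of A "\<lambda>_. a" "\<lambda>_. 1"] by (simp add: add.commute)

lemma per_S:
  fixes n k s :: nat and c :: real
  assumes n: "n \<ge> 3" and k: "real k = real n / 3 * (ln (2 * real n) + c)"
    and s: "s \<le> n"
  shows "2^s * lam n s^(2*k) \<le> (exp (-c) / real n)^s + 2^s * (1/4)^k"
proof (cases "lam n s \<ge> 0")
  case True
  have nr: "real n > 0" using n by simp
  have "lam n s \<le> exp (- (3 * real s / (2 * real n)))"
    using exp_ge_add_one_self[of "- (3 * real s / (2 * real n))"] unfolding lam_def by simp
  hence "lam n s^(2*k) \<le> exp (- (3 * real s / (2 * real n)))^(2*k)"
    using True by (intro power_mono) auto
  also have "\<dots> = exp (real (2*k) * (- (3 * real s / (2 * real n))))"
    by (rule exp_of_nat_mult[symmetric])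
  also have "real (2*k) * (- (3 * real s / (2 * real n))) = real s * (- (ln (2 * real n) + c))"
    using nr unfolding of_nat_mult k by (simp add: field_simps)
  also have "exp \<dots> = exp (- (ln (2 * real n) + c)) ^ s" by (rule exp_of_nat_mult)
  also have "exp (- (ln (2 * real n) + c)) = exp (-c) / (2 * real n)"
  proof -
    have "exp (ln (2 * real n) + c) = 2 * real n * exp c" using nr by (simp add: exp_add)
    hence "exp (- (ln (2 * real n) + c)) = inverse (2 * real n * exp c)" by (simp only: exp_minus)
    thus ?thesis by (simp add: exp_minus field_simps)
  qed
  finally have "2^s * lam n s^(2*k) \<le> 2^s * (exp (-c) / (2 * real n))^s" by simp
  also have "\<dots> = (exp (-c) / real n)^s" by (simp add: power_mult_distrib[symmetric])
  finally have "2^s * lam n s^(2*k) \<le> (exp (-c) / real n)^s" .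
  moreover have "0 \<le> (2::real)^s * (1/4)^k" by simp
  ultimately show ?thesis by linarith
next
  case False
  have "lam n s \<ge> -1/2" using s n unfolding lam_def by (simp add: field_simps)
  hence "(- lam n s)^2 \<le> (1/2)^2" using False by (intro power_mono) auto
  hence "(lam n s)^2 \<le> 1/4" by (simp add: power2_eq_square)
  hence "lam n s^(2*k) \<le> (1/4)^k"
    by (simp add: power_mult power_mono)
  hence "2^s * lam n s^(2*k) \<le> 2^s * (1/4)^k" by simp
  moreover have "0 \<le> (exp (-c) / real n)^s" by simp
  ultimately show ?thesis by linarith
qed



theorem theorem1p2:
  fixes n k :: nat and c :: real
  assumes "n \<ge> 3" and "c > 0"
    and "real k = real n / 3 * (ln (2 * real n) + c)"
  shows "(tv_dist (hamming_space n 3) (hamming_nu n 3 k) (hamming_pi n 3))\<^sup>2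
           \<le> 5 / 2 * (exp (exp (- c)) - 1)"
proof -
  note n = assms(1) and c = assms(2) and k = assms(3)
  have n1: "n \<ge> 1" using n by simp
  define X where "X = hamming_space n 3"
  define d where "d x = hamming_nu n 3 k x - hamming_pi n 3 x" for x
  define t where "t = exp (- c)"
  define P where "P = Pow {..<n} - {{}}"
  have t0: "t \<ge> 0" unfolding t_def by simp
  have fin: "finite X" unfolding X_def by (rule hs_finite)
  have s0: "(\<Sum>x\<in>X. hamming_nu n 3 k x - hamming_pi n 3 x) = 0"
    unfolding X_def by (rule sum_d[OF n1])
  note tv = tv_bound[OF fin s0]
  have CS: "(\<Sum>x\<in>X. \<bar>d x\<bar>)\<^sup>2 \<le> real (card X) * (\<Sum>x\<in>X. (d x)\<^sup>2)"
    using Cauchy_Schwarz_ineq_sum[of "\<lambda>_. 1" "\<lambda>x. \<bar>d x\<bar>" X] by simp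
  have "real (card X) * (\<Sum>x\<in>X. (d x)\<^sup>2) = (\<Sum>S\<in>P. 2^card S * lam n (card S)^(2*k))"
    unfolding X_def d_def P_def card_hs using sumsq_d[OF n1] by simp
  also have "\<dots> \<le> (\<Sum>S\<in>P. (t / real n)^card S + 2^card S * (1/4)^k)"
  proof (intro sum_mono)
    fix S assume "S \<in> P"
    hence "card S \<le> n" using card_mono[of "{..<n}" S] by (auto simp: P_def)
    thus "2^card S * lam n (card S)^(2*k) \<le> (t / real n)^card S + 2^card S * (1/4)^k"
      unfolding t_def by (rule per_S[OF n k])
  qed
  also have "\<dots> = (\<Sum>S\<in>P. (t / real n)^card S) + (\<Sum>S\<in>P. 2^card S * (1/4)^k)"
    by (rule sum.distrib)
  also have "(\<Sum>S\<in>P. (t / real n)^card S) = (1 + t / real n)^n - 1"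
  proof -
    have "(\<Sum>S\<in>Pow {..<n}. (t / real n)^card S) = (t / real n)^card {} + (\<Sum>S\<in>P. (t / real n)^card S)"
      unfolding P_def by (subst sum.remove[of _ "{}"]) auto
    thus ?thesis using sum_pow_card[of "{..<n}" "t / real n"] by simp
  qed
  also have "(\<Sum>S\<in>P. 2^card S * (1/4)^k) \<le> (\<Sum>S\<in>Pow {..<n}. 2^card S * (1/4::real)^k)"
    unfolding P_def by (intro sum_mono2) auto
  also have "\<dots> = 3^n * (1/4)^k"
    using sum_pow_card[of "{..<n}" 2] by (simp add: sum_distrib_right[symmetric])
  also have "\<dots> \<le> 9 * t" unfolding t_def by (rule num_bound[OF n c k])
  also have "(1 + t / real n)^n \<le> exp t"
  proof -
    have "(1 + t / real n)^n \<le> exp (t / real n)^n"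
      using exp_ge_add_one_self[of "t / real n"] t0 by (intro power_mono) auto
    also have "\<dots> = exp t" using n1 by (simp add: exp_of_nat_mult[symmetric])
    finally show ?thesis .
  qed
  finally have main: "(\<Sum>x\<in>X. \<bar>d x\<bar>)\<^sup>2 \<le> exp t - 1 + 9 * t"
    using CS by simp
  have "t \<le> exp t - 1" using exp_ge_add_one_self[of t] by linarith
  hence main2: "(\<Sum>x\<in>X. \<bar>d x\<bar>)\<^sup>2 \<le> 10 * (exp t - 1)" using main by simp
  let ?T = "tv_dist X (hamming_nu n 3 k) (hamming_pi n 3)"
  have "?T\<^sup>2 \<le> ((\<Sum>x\<in>X. \<bar>d x\<bar>) / 2)\<^sup>2"
    using tv unfolding d_def by (intro power_mono) auto
  also have "\<dots> = (\<Sum>x\<in>X. \<bar>d x\<bar>)\<^sup>2 / 4" by (simp add: power_divide)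
  also have "\<dots> \<le> 5 / 2 * (exp t - 1)" using main2 by simp
  finally show ?thesis unfolding X_def t_def .
qed

end
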